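(* Fix an integer $n\ge1$. Then $x\mapsto\psi(x;n)$ is non-decreasing on $\mathbb Z_{\ge0}$; for all $x\in\mathbb Z_{\ge0}$ one has $\mathfrak p^n_1(x,x+1)\ge\frac12\ge\mathfrak p^n_1(x,x-1)$; and $x\mapsto\mathfrak p^n_1(x,x+1)$ is non-increasing while $x\mapsto\mathfrak p^n_1(x,x-1)$ is non-decreasing.
   Context: Let $p_n(w)$ be the probability that simple symmetric random walk on $\mathbb Z$ started at $0$ is at $w$ at time $n$. For $x,y\in\mathbb Z_{\ge0}$ set $p^{(1/2)}_n(x,y)=p_n(x-y)-p_n(x+y+2)$ (and $p^{(1/2)}_n(x,-1)=0$), $\psi(x;n)=\sum_{y\ge0}p^{(1/2)}_n(x,y)$, and for $0\le n\le N$, $\mathfrak p^N_n(x,y)=p^{(1/2)}_n(x,y)\,\psi(y;N-n)/\psi(x;N)$. Thus $\mathfrak p^n_1(x,x\pm1)$ are the one-step transition probabilities at time $0$ of simple random walk of length $n$ conditioned to stay non-negative. *)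

theory Defs
  imports Complex_Main
begin

fun srw_p :: "nat \<Rightarrow> int \<Rightarrow> real" where
  "srw_p 0 w = (if w = 0 then 1 else 0)"
| "srw_p (Suc n) w = (srw_p n (w - 1) + srw_p n (w + 1)) / 2"

text \<open>Killed (reflected at -1) kernel p^(1/2)_n(x,y) = p_n(x-y) - p_n(x+y+2), with the
  convention p^(1/2)_n(x,-1) = 0.\<close>
definition p_half :: "nat \<Rightarrow> int \<Rightarrow> int \<Rightarrow> real" where
  "p_half n x y = (if y = -1 then 0 else srw_p n (x - y) - srw_p n (x + y + 2))"

definition psi :: "int \<Rightarrow> nat \<Rightarrow> real" where
  "psi x n = (\<Sum>y::nat. p_half n x (int y))"

text \<open>Transition kernel of the walk of length N conditioned to stay non-negative.\<close>
definition frakp :: "nat \<Rightarrow> nat \<Rightarrow> int \<Rightarrow> int \<Rightarrow> real" where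
  "frakp N n x y = p_half n x y * psi y (N - n) / psi x N"

end

theory Submission
  imports Defs
begin

lemma srw_sym: "srw_p n (-w) = srw_p n w"
proof (induction n arbitrary: w)
  case 0 then show ?case by simp
next
  case (Suc n)
  have a: "srw_p n (-w-1) = srw_p n (w+1)" using Suc[of "w+1"] by simp
  have b: "srw_p n (-w+1) = srw_p n (w-1)" using Suc[of "w-1"] by simp
  show ?case using a b by simp
qed

lemma srw_zero: "int n < \<bar>w\<bar> \<Longrightarrow> srw_p n w = 0"
  by (induction n arbitrary: w) auto

lemma p_half_zero: "\<bar>x\<bar> + int n < y \<Longrightarrow> p_half n x y = 0"
proof -
  assume a: "\<bar>x\<bar> + int n < y"
  have "srw_p n (x-y) = 0" by (rule srw_zero) (use a in arith)
  moreover have "srw_p n (x+y+2) = 0" by (rule srw_zero) (use a in arith)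
  ultimately show ?thesis unfolding p_half_def by simp
qed

lemma psi_sums: "(\<lambda>y. p_half n x (int y)) sums psi x n"
proof -
  have "(\<lambda>y. p_half n x (int y)) sums (\<Sum>y\<in>{..nat(\<bar>x\<bar>+int n)}. p_half n x (int y))"
    by (rule sums_finite) (auto intro!: p_half_zero)
  then show ?thesis unfolding psi_def by (simp add: sums_iff)
qed

lemma p_half_Suc: "p_half (Suc n) x (int y) = (p_half n (x-1) (int y) + p_half n (x+1) (int y))/2"
  unfolding p_half_def by (simp add: algebra_simps add_divide_distrib diff_divide_distrib)

lemma psi_Suc: "psi x (Suc n) = (psi (x-1) n + psi (x+1) n)/2"
proof -
  have "(\<lambda>y. (p_half n (x-1) (int y) + p_half n (x+1) (int y))/2) sums ((psi (x-1) n + psi (x+1) n)/2)"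
    by (intro sums_divide sums_add psi_sums)
  then have "(\<lambda>y. p_half (Suc n) x (int y)) sums ((psi (x-1) n + psi (x+1) n)/2)"
    by (simp add: p_half_Suc)
  then show ?thesis using psi_sums sums_unique2 by blast
qed

lemma psi_m1: "psi (-1) n = 0"
proof -
  have "p_half n (-1) (int y) = 0" for y
    using srw_sym[of n "int y + 1"] unfolding p_half_def by (simp add: algebra_simps)
  then show ?thesis unfolding psi_def by simp
qed

lemma psi_0: "x \<ge> 0 \<Longrightarrow> psi x 0 = 1"
proof -
  assume x: "x \<ge> 0"
  have "p_half 0 x (int y) = (if y = nat x then 1 else 0)" for y
    using x unfolding p_half_def by auto
  moreover have "(\<lambda>y::nat. if y = nat x then 1 else 0) sums (1::real)"
    using sums_single[of "nat x" "\<lambda>_. 1::real"] by simp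
  ultimately have "(\<lambda>y. p_half 0 x (int y)) sums 1" by simp
  then show ?thesis using psi_sums[of 0 x] sums_unique2 by blast
qed

lemma psi_shape: "\<forall>x\<ge>0. psi (x-1) m \<le> psi x m \<and> psi (x+1) m - psi x m \<le> psi x m - psi (x-1) m"
proof (induction m)
  case 0
  show ?case
  proof (intro allI impI)
    fix x :: int assume x: "x \<ge> 0"
    show "psi (x-1) 0 \<le> psi x 0 \<and> psi (x+1) 0 - psi x 0 \<le> psi x 0 - psi (x-1) 0"
    proof (cases "x = 0")
      case True then show ?thesis using psi_m1[of 0] psi_0[of 0] psi_0[of 1] by simp
    next
      case False then show ?thesis using x psi_0[of x] psi_0[of "x-1"] psi_0[of "x+1"] by simp
    qed
  qed
next
  case (Suc m)
  let ?F = "\<lambda>x. psi x m"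
  have mono: "?F (x-1) \<le> ?F x" and conc: "?F (x+1) - ?F x \<le> ?F x - ?F (x-1)" if "x \<ge> 0" for x
    using Suc that by auto
  show ?case
  proof (intro allI impI)
    fix x :: int assume x: "x \<ge> 0"
    have G: "psi z (Suc m) = (?F (z-1) + ?F (z+1))/2" for z by (rule psi_Suc)
    show "psi (x-1) (Suc m) \<le> psi x (Suc m) \<and> psi (x+1) (Suc m) - psi x (Suc m) \<le> psi x (Suc m) - psi (x-1) (Suc m)"
    proof (cases "x = 0")
      case True
      have "?F 0 \<le> ?F 1" using mono[of 1] by simp
      moreover have "?F (-1) \<le> ?F 0" using mono[of 0] by simp
      moreover have "?F 2 - ?F 1 \<le> ?F 1 - ?F 0" using conc[of 1] by simp
      moreover have "psi 0 (Suc m) = (?F (-1) + ?F 1)/2" using G[of 0] by simp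
      moreover have "psi 1 (Suc m) = (?F 0 + ?F 2)/2" using G[of 1] by simp
      moreover have "psi (-1) (Suc m) = 0" "?F (-1) = 0" using psi_m1 by auto
      ultimately show ?thesis using True by simp
    next
      case False
      have "?F (x-2) \<le> ?F (x-1)" using mono[of "x-1"] False x by (simp add: algebra_simps)
      moreover have "?F x \<le> ?F (x+1)" using mono[of "x+1"] x by simp
      moreover have "?F x - ?F (x-1) \<le> ?F (x-1) - ?F (x-2)" using conc[of "x-1"] False x by (simp add: algebra_simps)
      moreover have "?F (x+2) - ?F (x+1) \<le> ?F (x+1) - ?F x" using conc[of "x+1"] x by (simp add: algebra_simps)
      moreover have "psi x (Suc m) = (?F (x-1) + ?F (x+1))/2" by (rule G)
      moreover have "psi (x-1) (Suc m) = (?F (x-2) + ?F x)/2" using G[of "x-1"] by simp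
      moreover have "psi (x+1) (Suc m) = (?F x + ?F (x+2))/2" using G[of "x+1"] by (simp add: add.assoc)
      ultimately have "psi (x-1) (Suc m) \<le> psi x (Suc m)"
        "psi (x+1) (Suc m) - psi x (Suc m) \<le> psi x (Suc m) - psi (x-1) (Suc m)"
        by (simp_all add: field_simps)
      then show ?thesis by simp
    qed
  qed
qed

lemma psi_mono: "-1 \<le> x \<Longrightarrow> x \<le> y \<Longrightarrow> psi x m \<le> psi y m"
proof -
  assume a: "-1 \<le> x" "x \<le> y"
  have "psi x m \<le> psi (x + int k) m" for k
  proof (induction k)
    case 0 then show ?case by simp
  next
    case (Suc k)
    have "psi (x + int k) m \<le> psi (x + int k + 1) m"
      using psi_shape[of m] a(1) spec[OF psi_shape[of m], of "x + int k + 1"] by simp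
    moreover have "x + int (Suc k) = x + int k + 1" by simp
    ultimately show ?case using Suc by (simp only:)
  qed
  from this[of "nat (y - x)"] a show ?thesis by simp
qed

lemma psi_nonneg: "-1 \<le> x \<Longrightarrow> 0 \<le> psi x m"
  using psi_mono[of "-1" x m] psi_m1[of m] by simp

lemma psi_pos: "0 \<le> x \<Longrightarrow> 0 < psi x m"
proof (induction m arbitrary: x)
  case 0 then show ?case by (simp add: psi_0)
next
  case (Suc m)
  have "0 < psi (x+1) m" using Suc by simp
  moreover have "0 \<le> psi (x-1) m" using Suc.prems by (intro psi_nonneg) simp
  ultimately show ?case by (simp add: psi_Suc)
qed

lemma psi_adj:
  assumes x: "0 \<le> x"
  shows "psi (x-1) m * psi (x+2) m \<le> psi x m * psi (x+1) m"
proof -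
  define a where "a = psi (x-1) m"
  define d1 where "d1 = psi x m - psi (x-1) m"
  define d2 where "d2 = psi (x+1) m - psi x m"
  define d3 where "d3 = psi (x+2) m - psi (x+1) m"
  have a0: "0 \<le> a" unfolding a_def using x by (intro psi_nonneg) simp
  have s0: "psi (x-1) m \<le> psi x m \<and> psi (x+1) m - psi x m \<le> psi x m - psi (x-1) m"
    using psi_shape[of m] x by blast
  have s1: "psi x m \<le> psi (x+1) m \<and> psi (x+2) m - psi (x+1) m \<le> psi (x+1) m - psi x m"
    using spec[OF psi_shape[of m], of "x+1"] x by (simp add: add.assoc)
  have s2: "psi (x+1) m \<le> psi (x+2) m"
    using psi_mono[of "x+1" "x+2" m] x by simp
  have "d1 \<ge> d3" "d1 \<ge> 0" "d2 \<ge> 0" using s0 s1 s2 unfolding d1_def d2_def d3_def by linarith+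
  then have "0 \<le> a*(d1-d3) + d1*(d1+d2)" using a0 by simp
  moreover have "psi x m * psi (x+1) m - psi (x-1) m * psi (x+2) m = a*(d1-d3) + d1*(d1+d2)"
    unfolding a_def d1_def d2_def d3_def by (simp add: algebra_simps)
  ultimately show ?thesis by linarith
qed

definition rr :: "nat \<Rightarrow> int \<Rightarrow> real" where "rr m x = psi (x-1) m / psi (x+1) m"

lemma rr_step: "0 \<le> x \<Longrightarrow> rr m x \<le> rr m (x+1)"
proof -
  assume x: "0 \<le> x"
  have p1: "0 < psi (x+1) m" "0 < psi (x+2) m" using x by (auto intro!: psi_pos)
  have "psi (x-1) m * psi (x+2) m \<le> psi x m * psi (x+1) m" by (rule psi_adj[OF x])
  moreover have e: "x + 1 - 1 = x" "x + 1 + 1 = x + 2" by simp_all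
  ultimately show ?thesis unfolding rr_def e using p1 by (simp add: divide_simps mult.commute)
qed

lemma rr_mono: "0 \<le> x \<Longrightarrow> x \<le> y \<Longrightarrow> rr m x \<le> rr m y"
proof -
  assume a: "0 \<le> x" "x \<le> y"
  have "rr m x \<le> rr m (x + int k)" for k
  proof (induction k)
    case 0 then show ?case by simp
  next
    case (Suc k)
    have "rr m (x + int k) \<le> rr m (x + int k + 1)" using a by (intro rr_step) simp
    moreover have "x + int (Suc k) = x + int k + 1" by simp
    ultimately show ?case using Suc by (simp only:)
  qed
  from this[of "nat (y - x)"] a show ?thesis by simp
qed

lemma srw1: "srw_p 1 w = (if w = 1 \<or> w = -1 then 1/2 else 0)"
  by (simp add: One_nat_def)

lemma fr_plus: "0 \<le> x \<Longrightarrow> frakp (Suc m) 1 x (x+1) = 1 / (rr m x + 1)"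
proof -
  assume x: "0 \<le> x"
  have ph: "p_half 1 x (x+1) = 1/2" unfolding p_half_def srw1 using x by simp
  have B: "0 < psi (x+1) m" using x by (intro psi_pos) simp
  have A: "0 \<le> psi (x-1) m" using x by (intro psi_nonneg) simp
  show ?thesis unfolding frakp_def rr_def ph using psi_Suc[of x m] A B
    by (simp add: field_simps)
qed

lemma fr_minus: "0 \<le> x \<Longrightarrow> frakp (Suc m) 1 x (x-1) = rr m x / (rr m x + 1)"
proof -
  assume x: "0 \<le> x"
  have B: "0 < psi (x+1) m" using x by (intro psi_pos) simp
  have A: "0 \<le> psi (x-1) m" using x by (intro psi_nonneg) simp
  have ph: "p_half 1 x (x-1) * psi (x-1) m = psi (x-1) m / 2"
  proof (cases "x = 0")
    case True then show ?thesis using psi_m1[of m] by (simp add: p_half_def)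
  next
    case False then show ?thesis using x unfolding p_half_def srw1 by simp
  qed
  have "frakp (Suc m) 1 x (x-1) = p_half 1 x (x-1) * psi (x-1) m / psi x (Suc m)"
    unfolding frakp_def by (simp only: diff_Suc_1)
  also have "\<dots> = (psi (x-1) m / 2) / psi x (Suc m)" by (simp only: ph)
  finally show ?thesis unfolding rr_def using psi_Suc[of x m] A B
    by (simp add: field_simps)
qed

lemma rr_nonneg: "0 \<le> x \<Longrightarrow> 0 \<le> rr m x"
  unfolding rr_def by (intro divide_nonneg_nonneg psi_nonneg) auto

lemma rr_le1: "0 \<le> x \<Longrightarrow> rr m x \<le> 1"
  unfolding rr_def using psi_mono[of "x-1" "x+1" m] psi_pos[of "x+1" m] by simp

theorem lemmaA4:
  fixes n :: nat
  assumes "n \<ge> 1"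
  shows "(\<forall>x y :: int. 0 \<le> x \<longrightarrow> x \<le> y \<longrightarrow> psi x n \<le> psi y n)
       \<and> (\<forall>x :: int. 0 \<le> x \<longrightarrow> frakp n 1 x (x + 1) \<ge> 1/2 \<and> 1/2 \<ge> frakp n 1 x (x - 1))
       \<and> (\<forall>x y :: int. 0 \<le> x \<longrightarrow> x \<le> y \<longrightarrow> frakp n 1 y (y + 1) \<le> frakp n 1 x (x + 1))
       \<and> (\<forall>x y :: int. 0 \<le> x \<longrightarrow> x \<le> y \<longrightarrow> frakp n 1 x (x - 1) \<le> frakp n 1 y (y - 1))"
proof -
  obtain m where n: "n = Suc m" using assms by (cases n) auto
  have c1: "\<forall>x y :: int. 0 \<le> x \<longrightarrow> x \<le> y \<longrightarrow> psi x n \<le> psi y n"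
    using psi_mono by simp
  have c2: "frakp n 1 x (x + 1) \<ge> 1/2 \<and> 1/2 \<ge> frakp n 1 x (x - 1)" if x: "0 \<le> x" for x
  proof -
    have "0 \<le> rr m x" "rr m x \<le> 1" using x rr_nonneg rr_le1 by auto
    then show ?thesis unfolding n fr_plus[OF x] fr_minus[OF x] by (simp add: field_simps)
  qed
  have c3: "frakp n 1 y (y + 1) \<le> frakp n 1 x (x + 1) \<and> frakp n 1 x (x - 1) \<le> frakp n 1 y (y - 1)"
    if x: "0 \<le> x" and xy: "x \<le> y" for x y
  proof -
    have y: "0 \<le> y" using x xy by simp
    have "0 \<le> rr m x" "rr m x \<le> rr m y" using x xy rr_nonneg rr_mono by auto
    then show ?thesis unfolding n fr_plus[OF x] fr_minus[OF x] fr_plus[OF y] fr_minus[OF y]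
      by (simp add: field_simps)
  qed
  show ?thesis using c1 c2 c3 by blast
qed

end
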